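(* Let $1\le p<\infty$, $1\le q<\infty$ and $\theta>0$. Then the grand amalgam Lebesgue function space $l^{q),\theta}(L^p)$, equipped with $\|\cdot\|_{p,q),\theta}$, is a normed space (functions equal almost everywhere being identified).
   Context: Let $X$ denote one of $\mathbb N$, $\mathbb N_0$ or $\mathbb Z$, and for $k\in X$ let $I_k=[k,k+1)$. For $1\le p,q<\infty$ and $\theta>0$, the grand amalgam Lebesgue function space $l^{q),\theta}(L^p)$ is the set of all complex-valued measurable functions $g$ defined on $\bigcup_{k\in X}I_k$ with $g\chi_{I_k}\in L^p$ for each $k\in X$ and $$\|g\|_{p,q),\theta}:=\sup_{\varepsilon>0}\Big(\varepsilon^{\theta}\sum_{k\in X}\Big(\int_k^{k+1}|g(x)|^p\,dx\Big)^{\frac{q(1+\varepsilon)}{p}}\Big)^{\frac{1}{q(1+\varepsilon)}}<\infty .$$ Equivalently $\|g\|_{p,q),\theta}=\sup_{\varepsilon>0}\varepsilon^{\frac{\theta}{q(1+\varepsilon)}}\big\|\{\|g\chi_{I_k}\|_{L^p}\}_{k\in X}\big\|_{l^{q(1+\varepsilon)}}$. *)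

theory Defs
  imports "HOL-Analysis.Analysis"
begin

definition admissible_index_set :: "int set \<Rightarrow> bool" where
  "admissible_index_set X \<longleftrightarrow> X = {k. k \<ge> 1} \<or> X = {k. k \<ge> 0} \<or> X = UNIV"

definition Ik :: "int \<Rightarrow> real set" where
  "Ik k = {real_of_int k ..< real_of_int k + 1}"

definition dom_X :: "int set \<Rightarrow> real set" where
  "dom_X X = (\<Union>k\<in>X. Ik k)"

definition loc_int :: "real \<Rightarrow> (real \<Rightarrow> complex) \<Rightarrow> int \<Rightarrow> real" where
  "loc_int p g k = (LINT x:Ik k|lebesgue. norm (g x) powr p)"

definition gal_term :: "int set \<Rightarrow> real \<Rightarrow> real \<Rightarrow> real \<Rightarrow> (real \<Rightarrow> complex) \<Rightarrow> real \<Rightarrow> real" where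
  "gal_term X p q \<theta> g \<epsilon> =
     (\<epsilon> powr \<theta> * (\<Sum>\<^sub>\<infinity>k\<in>X. loc_int p g k powr (q * (1 + \<epsilon>) / p))) powr (1 / (q * (1 + \<epsilon>)))"

text \<open>The grand amalgam space l^{q),theta}(L^p) (as a set of functions; a.e.-equal functions
  are identified by the norm). Finiteness of the supremum is expressed as: all the series
  converge and the resulting values are bounded.\<close>
definition grand_amalgam :: "int set \<Rightarrow> real \<Rightarrow> real \<Rightarrow> real \<Rightarrow> (real \<Rightarrow> complex) set" where
  "grand_amalgam X p q \<theta> = {g.
     set_borel_measurable lebesgue (dom_X X) g \<and>
     (\<forall>k\<in>X. set_integrable lebesgue (Ik k) (\<lambda>x. norm (g x) powr p)) \<and>
     (\<forall>\<epsilon>>0. (\<lambda>k. loc_int p g k powr (q * (1 + \<epsilon>) / p)) summable_on X) \<and>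
     bdd_above (gal_term X p q \<theta> g ` {0<..})}"

definition gal_norm :: "int set \<Rightarrow> real \<Rightarrow> real \<Rightarrow> real \<Rightarrow> (real \<Rightarrow> complex) \<Rightarrow> real" where
  "gal_norm X p q \<theta> g = (SUP \<epsilon>\<in>{0<..}. gal_term X p q \<theta> g \<epsilon>)"

end

theory Submission
  imports Defs
begin


lemma pw_ineq_pos:
  fixes a b A B p :: real
  assumes "a > 0" "b > 0" "A > 0" "B > 0" "p \<ge> 1"
  shows "(a+b) powr p \<le> (A+B) powr (p-1) * (a powr p / A powr (p-1) + b powr p / B powr (p-1))"
proof -
  define t where "t = B/(A+B)"
  have t: "0 \<le> t" "t \<le> 1" using assms by (auto simp: t_def)
  have 1: "1 - t = A/(A+B)" using assms by (simp add: t_def field_simps)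
  have "((1 - t) *\<^sub>R (a/A) + t *\<^sub>R (b/B)) powr p \<le> (1 - t) * (a/A) powr p + t * (b/B) powr p"
    using convex_onD[OF powr_convex[OF assms(5)] t, of "a/A" "b/B"] assms by auto
  moreover have "(1 - t) *\<^sub>R (a/A) + t *\<^sub>R (b/B) = (a+b)/(A+B)"
  proof -
    have "(1 - t) *\<^sub>R (a/A) + t *\<^sub>R (b/B) = A/(A+B) * (a/A) + B/(A+B) * (b/B)"
      unfolding real_scaleR_def 1 unfolding t_def by (rule refl)
    also have "\<dots> = a/(A+B) + b/(A+B)" using assms by simp
    also have "\<dots> = (a+b)/(A+B)" by (simp add: add_divide_distrib)
    finally show ?thesis .
  qed
  ultimately have "((a+b)/(A+B)) powr p \<le> (1 - t) * (a/A) powr p + t * (b/B) powr p"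
    by metis
  hence *: "((a+b)/(A+B)) powr p \<le> A/(A+B) * (a powr p / A powr p) + B/(A+B) * (b powr p / B powr p)"
    unfolding 1 unfolding t_def using assms by (simp add: powr_divide)
  have eA: "A powr p = A * A powr (p-1)" using assms powr_add[of A 1 "p-1"] by simp
  have eB: "B powr p = B * B powr (p-1)" using assms powr_add[of B 1 "p-1"] by simp
  have eAB: "(A+B) powr p = (A+B) * (A+B) powr (p-1)" using assms powr_add[of "A+B" 1 "p-1"] by simp
  have "(a+b) powr p = (A+B) powr p * ((a+b)/(A+B)) powr p"
    using assms by (simp add: powr_divide)
  also have "\<dots> \<le> (A+B) powr p * (A/(A+B) * (a powr p / A powr p) + B/(A+B) * (b powr p / B powr p))"
    using * assms by (intro mult_left_mono) auto
  also have "\<dots> = (A+B) powr (p-1) * (a powr p / A powr (p-1) + b powr p / B powr (p-1))"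
  proof -
    have h: "(A+B) powr p * (C/(A+B) * (x / C powr p)) = (A+B) powr (p-1) * (x / C powr (p-1))"
      if "C > 0" "C powr p = C * C powr (p-1)" for C x
    proof -
      have alg: "(S*Q) * (C/S * (x/(C*R))) = Q*(x/R)" if "S > 0" "C > 0" "R > 0" for S Q R :: real
        using that by (simp add: field_simps)
      have "C powr (p-1) > 0" "A + B > 0" using that assms by simp_all
      thus ?thesis using that alg[of "A+B" "C powr (p-1)" "(A+B) powr (p-1)"] by (simp add: eAB)
    qed
    show ?thesis unfolding distrib_left using h[of A, OF _ eA] h[of B, OF _ eB] assms by simp
  qed
  finally show ?thesis .
qed

lemma pw_ineq:
  fixes a b A B p :: real
  assumes "a \<ge> 0" "b \<ge> 0" "A > 0" "B > 0" "p \<ge> 1"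
  shows "(a+b) powr p \<le> (A+B) powr (p-1) * (a powr p / A powr (p-1) + b powr p / B powr (p-1))"
proof (cases "a = 0 \<or> b = 0")
  case False thus ?thesis using pw_ineq_pos[of a b A B p] assms by auto
next
  case True
  have mA: "A powr (p-1) \<le> (A+B) powr (p-1)" "B powr (p-1) \<le> (A+B) powr (p-1)"
    using assms by (auto intro!: powr_mono2)
  have pA: "A powr (p-1) > 0" "B powr (p-1) > 0" using assms by auto
  show ?thesis
  proof (cases "a = 0")
    case True
    have "b powr p \<le> (A+B) powr (p-1) * (b powr p / B powr (p-1))"
      using mA pA by (simp add: divide_simps mult_left_mono mult.commute)
    thus ?thesis using True assms by simp
  next
    case False
    hence "b = 0" using True by auto
    have "a powr p \<le> (A+B) powr (p-1) * (a powr p / A powr (p-1))"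
      using mA pA by (simp add: divide_simps mult_left_mono mult.commute)
    thus ?thesis using \<open>b = 0\<close> assms by simp
  qed
qed

lemma mink_core:
  fixes Ia Ib Ic p :: real
  assumes p: "p \<ge> 1" and nn: "Ia \<ge> 0" "Ib \<ge> 0" "Ic \<ge> 0"
    and H: "\<And>A B. A > 0 \<Longrightarrow> B > 0 \<Longrightarrow> Ic \<le> (A+B) powr (p-1) * (Ia / A powr (p-1) + Ib / B powr (p-1))"
  shows "Ic powr (1/p) \<le> Ia powr (1/p) + Ib powr (1/p)"
proof (rule field_le_epsilon)
  fix e :: real assume e: "e > 0"
  define A where "A = Ia powr (1/p) + e/2"
  define B where "B = Ib powr (1/p) + e/2"
  have A: "A > 0" and B: "B > 0" using e by (auto simp: A_def B_def intro: add_nonneg_pos)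
  have key: "I / C powr (p-1) \<le> C" if "I \<ge> 0" "C > 0" "I powr (1/p) \<le> C" for I C
  proof -
    have "I = (I powr (1/p)) powr p" using that p by (simp add: powr_powr)
    also have "\<dots> \<le> C powr p" using that p by (intro powr_mono2) auto
    also have "\<dots> = C * C powr (p-1)" using that powr_add[of C 1 "p-1"] by simp
    finally have "I \<le> C * C powr (p-1)" .
    thus ?thesis using that by (simp add: divide_simps)
  qed
  have "Ic \<le> (A+B) powr (p-1) * (Ia / A powr (p-1) + Ib / B powr (p-1))" using H A B by blast
  also have "\<dots> \<le> (A+B) powr (p-1) * (A + B)"
    using key[of Ia A] key[of Ib B] nn A B e by (intro mult_left_mono add_mono) (auto simp: A_def B_def)
  also have "\<dots> = (A+B) powr p" using A B powr_add[of "A+B" 1 "p-1"] by simp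
  finally have "Ic powr (1/p) \<le> ((A+B) powr p) powr (1/p)" using nn p by (intro powr_mono2) auto
  also have "\<dots> = A + B" using A B p by (simp add: powr_powr)
  finally show "Ic powr (1/p) \<le> Ia powr (1/p) + Ib powr (1/p) + e" by (simp add: A_def B_def)
qed

lemma mink_int:
  fixes M :: "'a measure" and a b c :: "'a \<Rightarrow> real" and p :: real
  assumes p: "p \<ge> 1" and nn: "\<And>x. a x \<ge> 0" "\<And>x. b x \<ge> 0" "\<And>x. c x \<ge> 0"
    and le: "\<And>x. c x \<le> a x + b x"
    and ia: "integrable M (\<lambda>x. a x powr p)" and ib: "integrable M (\<lambda>x. b x powr p)"
    and ic: "integrable M (\<lambda>x. c x powr p)"
  shows "(\<integral>x. c x powr p \<partial>M) powr (1/p) \<le> (\<integral>x. a x powr p \<partial>M) powr (1/p) + (\<integral>x. b x powr p \<partial>M) powr (1/p)"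
proof (rule mink_core[OF p])
  show "(\<integral>x. a x powr p \<partial>M) \<ge> 0" "(\<integral>x. b x powr p \<partial>M) \<ge> 0" "(\<integral>x. c x powr p \<partial>M) \<ge> 0"
    by (auto intro!: integral_nonneg_AE)
  fix A B :: real assume A: "A > 0" and B: "B > 0"
  have "(\<integral>x. c x powr p \<partial>M) \<le> (\<integral>x. (A+B) powr (p-1) * (a x powr p / A powr (p-1) + b x powr p / B powr (p-1)) \<partial>M)"
  proof (rule integral_mono[OF ic])
    show "integrable M (\<lambda>x. (A+B) powr (p-1) * (a x powr p / A powr (p-1) + b x powr p / B powr (p-1)))"
      using ia ib by auto
    fix x
    have "c x powr p \<le> (a x + b x) powr p" using nn le p by (intro powr_mono2) auto
    also have "\<dots> \<le> (A+B) powr (p-1) * (a x powr p / A powr (p-1) + b x powr p / B powr (p-1))"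
      using pw_ineq[of "a x" "b x" A B p] nn A B p by auto
    finally show "c x powr p \<le> (A+B) powr (p-1) * (a x powr p / A powr (p-1) + b x powr p / B powr (p-1))" .
  qed
  also have "\<dots> = (A+B) powr (p-1) * ((\<integral>x. a x powr p \<partial>M) / A powr (p-1) + (\<integral>x. b x powr p \<partial>M) / B powr (p-1))"
    using ia ib by simp
  finally show "(\<integral>x. c x powr p \<partial>M) \<le> (A+B) powr (p-1) * ((\<integral>x. a x powr p \<partial>M) / A powr (p-1) + (\<integral>x. b x powr p \<partial>M) / B powr (p-1))" .
qed

lemma mink_sum:
  fixes X :: "'i set" and a b c :: "'i \<Rightarrow> real" and p :: real
  assumes p: "p \<ge> 1" and nn: "\<And>x. x \<in> X \<Longrightarrow> a x \<ge> 0" "\<And>x. x \<in> X \<Longrightarrow> b x \<ge> 0" "\<And>x. x \<in> X \<Longrightarrow> c x \<ge> 0"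
    and le: "\<And>x. x \<in> X \<Longrightarrow> c x \<le> a x + b x"
    and ia: "(\<lambda>x. a x powr p) summable_on X" and ib: "(\<lambda>x. b x powr p) summable_on X"
    and ic: "(\<lambda>x. c x powr p) summable_on X"
  shows "(\<Sum>\<^sub>\<infinity>x\<in>X. c x powr p) powr (1/p) \<le> (\<Sum>\<^sub>\<infinity>x\<in>X. a x powr p) powr (1/p) + (\<Sum>\<^sub>\<infinity>x\<in>X. b x powr p) powr (1/p)"
proof (rule mink_core[OF p])
  show "(\<Sum>\<^sub>\<infinity>x\<in>X. a x powr p) \<ge> 0" "(\<Sum>\<^sub>\<infinity>x\<in>X. b x powr p) \<ge> 0" "(\<Sum>\<^sub>\<infinity>x\<in>X. c x powr p) \<ge> 0"
    by (auto intro!: infsum_nonneg)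
  fix A B :: real assume A: "A > 0" and B: "B > 0"
  have ha: "((\<lambda>x. a x powr p) has_sum (\<Sum>\<^sub>\<infinity>x\<in>X. a x powr p)) X" using ia by (simp add: has_sum_infsum)
  have hb: "((\<lambda>x. b x powr p) has_sum (\<Sum>\<^sub>\<infinity>x\<in>X. b x powr p)) X" using ib by (simp add: has_sum_infsum)
  have hc: "((\<lambda>x. c x powr p) has_sum (\<Sum>\<^sub>\<infinity>x\<in>X. c x powr p)) X" using ic by (simp add: has_sum_infsum)
  have h: "((\<lambda>x. (A+B) powr (p-1) * (a x powr p / A powr (p-1) + b x powr p / B powr (p-1))) has_sum
     ((A+B) powr (p-1) * ((\<Sum>\<^sub>\<infinity>x\<in>X. a x powr p) / A powr (p-1) + (\<Sum>\<^sub>\<infinity>x\<in>X. b x powr p) / B powr (p-1)))) X"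
    by (intro has_sum_cmult_right has_sum_add has_sum_divide_const ha hb)
  show "(\<Sum>\<^sub>\<infinity>x\<in>X. c x powr p) \<le> (A+B) powr (p-1) * ((\<Sum>\<^sub>\<infinity>x\<in>X. a x powr p) / A powr (p-1) + (\<Sum>\<^sub>\<infinity>x\<in>X. b x powr p) / B powr (p-1))"
  proof (rule has_sum_mono[OF hc h])
    fix x assume x: "x \<in> X"
    have "c x powr p \<le> (a x + b x) powr p" using nn le p x by (intro powr_mono2) auto
    also have "\<dots> \<le> (A+B) powr (p-1) * (a x powr p / A powr (p-1) + b x powr p / B powr (p-1))"
      using pw_ineq[of "a x" "b x" A B p] nn A B p x by auto
    finally show "c x powr p \<le> (A+B) powr (p-1) * (a x powr p / A powr (p-1) + b x powr p / B powr (p-1))" .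
  qed
qed



lemma ind_powr: "p > 0 \<Longrightarrow> indicator A x * (h x powr p) = (indicator A x * h x) powr (p::real)"
  by (cases "x \<in> A") auto

lemma loc_int_alt: "p > 0 \<Longrightarrow> loc_int p f k = integral\<^sup>L lebesgue (\<lambda>x. (indicator (Ik k) x * norm (f x)) powr p)"
proof -
  assume p: "p > 0"
  have "(\<lambda>x. indicator (Ik k) x *\<^sub>R (norm (f x) powr p)) = (\<lambda>x. (indicator (Ik k) x * norm (f x)) powr p)"
    using ind_powr[OF p] by (auto simp: fun_eq_iff)
  thus ?thesis unfolding loc_int_def set_lebesgue_integral_def by simp
qed

lemma setint_alt: "p > 0 \<Longrightarrow> set_integrable lebesgue (Ik k) (\<lambda>x. norm (f x) powr p) \<longleftrightarrow>
   integrable lebesgue (\<lambda>x. (indicator (Ik k) x * norm (f x)) powr p)"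
proof -
  assume p: "p > 0"
  have "(\<lambda>x. indicator (Ik k) x *\<^sub>R (norm (f x) powr p)) = (\<lambda>x. (indicator (Ik k) x * norm (f x)) powr p)"
    using ind_powr[OF p] by (auto simp: fun_eq_iff)
  thus ?thesis unfolding set_integrable_def by simp
qed

lemma loc_int_nonneg: "loc_int p f k \<ge> 0"
  unfolding loc_int_def set_lebesgue_integral_def by (intro integral_nonneg_AE) auto

lemma Ik_sets[measurable]: "Ik k \<in> sets lebesgue"
  unfolding Ik_def by simp

lemma Ik_sub: "k \<in> X \<Longrightarrow> Ik k \<subseteq> dom_X X"
  unfolding dom_X_def by auto

lemma meas_loc:
  assumes "set_borel_measurable lebesgue (dom_X X) f" "k \<in> X"
  shows "(\<lambda>x. indicator (Ik k) x * norm (f x)) \<in> borel_measurable lebesgue"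
proof -
  have F[measurable]: "(\<lambda>x. indicator (dom_X X) x *\<^sub>R f x) \<in> borel_measurable lebesgue"
    using assms(1) unfolding set_borel_measurable_def .
  have eq: "(\<lambda>x. indicator (Ik k) x * norm (f x)) = (\<lambda>x. indicator (Ik k) x * norm (indicator (dom_X X) x *\<^sub>R f x))"
  proof
    fix x show "indicator (Ik k) x * norm (f x) = indicator (Ik k) x * norm (indicator (dom_X X) x *\<^sub>R f x)"
      using Ik_sub[OF assms(2)] by (cases "x \<in> Ik k") (auto simp: indicator_def)
  qed
  show ?thesis unfolding eq by measurable
qed

lemma meas_add:
  assumes "set_borel_measurable lebesgue S f" "set_borel_measurable lebesgue S g"
  shows "set_borel_measurable lebesgue S (\<lambda>x. f x + g x :: complex)"
  using assms unfolding set_borel_measurable_def by (simp add: scaleR_add_right)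

lemma meas_mult:
  assumes "set_borel_measurable lebesgue S f"
  shows "set_borel_measurable lebesgue S (\<lambda>x. c * f x :: complex)"
proof -
  have [measurable]: "(\<lambda>x. indicator S x *\<^sub>R f x) \<in> borel_measurable lebesgue"
    using assms unfolding set_borel_measurable_def .
  have eq: "(\<lambda>x. indicator S x *\<^sub>R (c * f x)) = (\<lambda>x. c * (indicator S x *\<^sub>R f x))"
    by (auto simp: indicator_def)
  show ?thesis unfolding set_borel_measurable_def eq by measurable
qed

lemma int_add:
  fixes f g :: "real \<Rightarrow> complex"
  assumes p: "p \<ge> 1" and mf: "set_borel_measurable lebesgue (dom_X X) f" and mg: "set_borel_measurable lebesgue (dom_X X) g"
    and k: "k \<in> X"
    and iF: "integrable lebesgue (\<lambda>x. (indicator (Ik k) x * norm (f x)) powr p)"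
    and iG: "integrable lebesgue (\<lambda>x. (indicator (Ik k) x * norm (g x)) powr p)"
  shows "integrable lebesgue (\<lambda>x. (indicator (Ik k) x * norm (f x + g x)) powr p)"
proof -
  have 1: "integrable lebesgue (\<lambda>x. 2 powr (p-1) * ((indicator (Ik k) x * norm (f x)) powr p + (indicator (Ik k) x * norm (g x)) powr p))"
    using iF iG by auto
  have [measurable]: "(\<lambda>x. indicator (Ik k) x * norm (f x + g x)) \<in> borel_measurable lebesgue"
    using meas_loc[OF meas_add[OF mf mg] k] .
  have 2: "(\<lambda>x. (indicator (Ik k) x * norm (f x + g x)) powr p) \<in> borel_measurable lebesgue"
    by measurable
  have 3: "AE x in lebesgue. norm ((indicator (Ik k) x * norm (f x + g x)) powr p) \<le>
      norm (2 powr (p-1) * ((indicator (Ik k) x * norm (f x)) powr p + (indicator (Ik k) x * norm (g x)) powr p))"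
  proof (rule AE_I2)
    fix x
    define u where "u = indicator (Ik k) x * norm (f x)"
    define v where "v = indicator (Ik k) x * norm (g x)"
    define w where "w = indicator (Ik k) x * norm (f x + g x)"
    have uv: "u \<ge> 0" "v \<ge> 0" "w \<ge> 0" "w \<le> u + v"
      by (auto simp: u_def v_def w_def indicator_def norm_triangle_ineq)
    have "w powr p \<le> (u+v) powr p" using uv p by (intro powr_mono2) auto
    also have "\<dots> \<le> (1+1) powr (p-1) * (u powr p / 1 powr (p-1) + v powr p / 1 powr (p-1))"
      using pw_ineq[of u v 1 1 p] uv p by auto
    finally have "w powr p \<le> 2 powr (p-1) * (u powr p + v powr p)" by simp
    thus "norm (w powr p) \<le> norm (2 powr (p-1) * (u powr p + v powr p))" by simp
  qed
  show ?thesis by (rule Bochner_Integration.integrable_bound[OF 1 2 3])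
qed



lemma ga_D:
  assumes "g \<in> grand_amalgam X p q \<theta>" "p \<ge> 1"
  shows "set_borel_measurable lebesgue (dom_X X) g"
    "\<And>k. k \<in> X \<Longrightarrow> integrable lebesgue (\<lambda>x. (indicator (Ik k) x * norm (g x)) powr p)"
    "\<And>\<epsilon>. \<epsilon> > 0 \<Longrightarrow> (\<lambda>k. loc_int p g k powr (q * (1 + \<epsilon>) / p)) summable_on X"
    "bdd_above (gal_term X p q \<theta> g ` {0<..})"
  using assms setint_alt[of p] by (auto simp: grand_amalgam_def)

lemma mink_loc:
  fixes f g :: "real \<Rightarrow> complex"
  assumes p: "p \<ge> 1" and mf: "set_borel_measurable lebesgue (dom_X X) f" and mg: "set_borel_measurable lebesgue (dom_X X) g"
    and k: "k \<in> X"
    and iF: "integrable lebesgue (\<lambda>x. (indicator (Ik k) x * norm (f x)) powr p)"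
    and iG: "integrable lebesgue (\<lambda>x. (indicator (Ik k) x * norm (g x)) powr p)"
  shows "loc_int p (\<lambda>x. f x + g x) k powr (1/p) \<le> loc_int p f k powr (1/p) + loc_int p g k powr (1/p)"
proof -
  have p0: "p > 0" using p by simp
  show ?thesis unfolding loc_int_alt[OF p0]
    by (rule mink_int[OF p _ _ _ _ iF iG int_add[OF p mf mg k iF iG]])
       (auto simp: indicator_def norm_triangle_ineq)
qed

lemma term_eq:
  assumes p: "p > 0" and r: "q * (1 + \<epsilon>) > 0" and e: "\<epsilon> > 0"
  shows "gal_term X p q \<theta> f \<epsilon> = (\<epsilon> powr \<theta>) powr (1/(q*(1+\<epsilon>))) *
     (\<Sum>\<^sub>\<infinity>k\<in>X. (loc_int p f k powr (1/p)) powr (q*(1+\<epsilon>))) powr (1/(q*(1+\<epsilon>)))"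
proof -
  have "(\<lambda>k. loc_int p f k powr (q * (1 + \<epsilon>) / p)) = (\<lambda>k. (loc_int p f k powr (1/p)) powr (q*(1+\<epsilon>)))"
    by (simp add: powr_powr)
  moreover have "(\<Sum>\<^sub>\<infinity>k\<in>X. (loc_int p f k powr (1/p)) powr (q*(1+\<epsilon>))) \<ge> 0"
    by (intro infsum_nonneg) auto
  ultimately show ?thesis unfolding gal_term_def using e by (simp add: powr_mult)
qed

lemma tri_term:
  fixes f g :: "real \<Rightarrow> complex"
  assumes f: "f \<in> grand_amalgam X p q \<theta>" and g: "g \<in> grand_amalgam X p q \<theta>"
    and p: "p \<ge> 1" and q: "q \<ge> 1" and e: "\<epsilon> > 0"
  shows "(\<lambda>k. loc_int p (\<lambda>x. f x + g x) k powr (q * (1 + \<epsilon>) / p)) summable_on X"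
    "gal_term X p q \<theta> (\<lambda>x. f x + g x) \<epsilon> \<le> gal_term X p q \<theta> f \<epsilon> + gal_term X p q \<theta> g \<epsilon>"
proof -
  define r where "r = q * (1 + \<epsilon>)"
  have "1 * 1 \<le> q * (1 + \<epsilon>)" using q e by (intro mult_mono) auto
  hence r: "r \<ge> 1" unfolding r_def by simp
  have p0: "p > 0" using p by simp
  define Nf where "Nf k = loc_int p f k powr (1/p)" for k
  define Ng where "Ng k = loc_int p g k powr (1/p)" for k
  define Nh where "Nh k = loc_int p (\<lambda>x. f x + g x) k powr (1/p)" for k
  have pw: "loc_int p h k powr (r / p) = (loc_int p h k powr (1/p)) powr r" for h :: "real \<Rightarrow> complex" and k
    by (simp add: powr_powr)
  have sf: "(\<lambda>k. Nf k powr r) summable_on X"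
    using ga_D(3)[OF f p e] unfolding Nf_def r_def[symmetric] pw .
  have sg: "(\<lambda>k. Ng k powr r) summable_on X"
    using ga_D(3)[OF g p e] unfolding Ng_def r_def[symmetric] pw .
  have le: "Nh k \<le> Nf k + Ng k" if "k \<in> X" for k
    unfolding Nh_def Nf_def Ng_def
    by (rule mink_loc[OF p ga_D(1)[OF f p] ga_D(1)[OF g p] that ga_D(2)[OF f p that] ga_D(2)[OF g p that]])
  have nn: "Nf k \<ge> 0" "Ng k \<ge> 0" "Nh k \<ge> 0" for k by (auto simp: Nf_def Ng_def Nh_def)
  have sh: "(\<lambda>k. Nh k powr r) summable_on X"
  proof (rule summable_on_comparison_test)
    show "(\<lambda>k. 2 powr (r-1) * (Nf k powr r + Ng k powr r)) summable_on X"
      by (intro summable_on_cmult_right summable_on_add sf sg)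
    fix k assume k: "k \<in> X"
    show "0 \<le> Nh k powr r" by simp
    have "Nh k powr r \<le> (Nf k + Ng k) powr r" using le[OF k] nn r by (intro powr_mono2) auto
    also have "\<dots> \<le> (1+1) powr (r-1) * (Nf k powr r / 1 powr (r-1) + Ng k powr r / 1 powr (r-1))"
      using pw_ineq[of "Nf k" "Ng k" 1 1 r] nn r by auto
    finally show "Nh k powr r \<le> 2 powr (r-1) * (Nf k powr r + Ng k powr r)" by simp
  qed
  thus "(\<lambda>k. loc_int p (\<lambda>x. f x + g x) k powr (q * (1 + \<epsilon>) / p)) summable_on X"
    unfolding r_def[symmetric] pw Nh_def .
  have M: "(\<Sum>\<^sub>\<infinity>k\<in>X. Nh k powr r) powr (1/r) \<le> (\<Sum>\<^sub>\<infinity>k\<in>X. Nf k powr r) powr (1/r) + (\<Sum>\<^sub>\<infinity>k\<in>X. Ng k powr r) powr (1/r)"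
    by (rule mink_sum[OF r _ _ _ le sf sg sh]) (use nn in auto)
  have r0: "q * (1 + \<epsilon>) > 0" using r r_def by simp
  show "gal_term X p q \<theta> (\<lambda>x. f x + g x) \<epsilon> \<le> gal_term X p q \<theta> f \<epsilon> + gal_term X p q \<theta> g \<epsilon>"
    unfolding term_eq[OF p0 r0 e] r_def[symmetric] Nf_def[symmetric] Ng_def[symmetric] Nh_def[symmetric]
    using M by (simp add: distrib_left[symmetric] mult_left_mono)
qed



lemma loc_int_mult: "loc_int p (\<lambda>x. c * f x) k = norm c powr p * loc_int p f k"
proof -
  have "(\<lambda>x. indicator (Ik k) x *\<^sub>R (norm (c * f x) powr p)) = (\<lambda>x. norm c powr p * (indicator (Ik k) x *\<^sub>R norm (f x) powr p))"
    by (auto simp: fun_eq_iff norm_mult powr_mult)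
  thus ?thesis unfolding loc_int_def set_lebesgue_integral_def by simp
qed

lemma term_mult:
  assumes p: "p > 0" and r: "q * (1 + \<epsilon>) > 0" and e: "\<epsilon> > 0"
  shows "gal_term X p q \<theta> (\<lambda>x. c * f x) \<epsilon> = norm c * gal_term X p q \<theta> f \<epsilon>"
proof -
  define r where "r = q * (1 + \<epsilon>)"
  have r0: "r > 0" using r r_def by simp
  have "(\<lambda>k. loc_int p (\<lambda>x. c * f x) k powr (r / p)) = (\<lambda>k. norm c powr r * loc_int p f k powr (r / p))"
    using p by (auto simp: fun_eq_iff loc_int_mult powr_mult loc_int_nonneg powr_powr)
  hence "(\<Sum>\<^sub>\<infinity>k\<in>X. loc_int p (\<lambda>x. c * f x) k powr (r / p)) = norm c powr r * (\<Sum>\<^sub>\<infinity>k\<in>X. loc_int p f k powr (r / p))"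
    by (simp add: infsum_cmult_right')
  moreover have "(\<Sum>\<^sub>\<infinity>k\<in>X. loc_int p f k powr (r / p)) \<ge> 0" by (intro infsum_nonneg) auto
  moreover have "(norm c powr r) powr (1/r) = norm c" using r0 by (simp add: powr_powr)
  ultimately show ?thesis unfolding gal_term_def r_def[symmetric]
    by (simp add: powr_mult mult.left_commute[of "\<epsilon> powr \<theta>"])
qed

lemma SUP_scale:
  fixes h :: "real \<Rightarrow> real"
  assumes C: "C \<ge> 0" and b: "bdd_above (h ` S)" and S: "S \<noteq> {}"
  shows "(SUP x\<in>S. C * h x) = C * (SUP x\<in>S. h x)"
proof (cases "C = 0")
  case True thus ?thesis using S by simp
next
  case False
  hence C: "C > 0" using C by simp
  obtain M where M: "\<And>x. x \<in> S \<Longrightarrow> h x \<le> M" using b by (auto simp: bdd_above_def)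
  have b2: "bdd_above ((\<lambda>x. C * h x) ` S)"
    using M C by (intro bdd_aboveI2[where M="C*M"]) (auto intro: mult_left_mono)
  show ?thesis
  proof (rule antisym)
    show "(SUP x\<in>S. C * h x) \<le> C * (SUP x\<in>S. h x)"
      using C S b by (intro cSUP_least) (auto intro!: mult_left_mono cSUP_upper)
    have "(SUP x\<in>S. h x) \<le> (SUP x\<in>S. C * h x) / C"
    proof (rule cSUP_least[OF S])
      fix x assume "x \<in> S"
      hence "C * h x \<le> (SUP x\<in>S. C * h x)" using b2 by (intro cSUP_upper)
      thus "h x \<le> (SUP x\<in>S. C * h x) / C" using C by (simp add: field_simps)
    qed
    thus "C * (SUP x\<in>S. h x) \<le> (SUP x\<in>S. C * h x)" using C by (simp add: field_simps)
  qed
qed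

lemma term_nonneg: "gal_term X p q \<theta> f \<epsilon> \<ge> 0"
  unfolding gal_term_def by simp

lemma norm_zero:
  fixes f :: "real \<Rightarrow> complex"
  assumes f: "f \<in> grand_amalgam X p q \<theta>" and p: "p \<ge> 1" and q: "q \<ge> 1"
  shows "gal_norm X p q \<theta> f = 0 \<longleftrightarrow> (AE x in lebesgue. x \<in> dom_X X \<longrightarrow> f x = 0)"
proof
  assume AE: "AE x in lebesgue. x \<in> dom_X X \<longrightarrow> f x = 0"
  have L0: "loc_int p f k = 0" if k: "k \<in> X" for k
    unfolding loc_int_def set_lebesgue_integral_def
  proof (rule integral_eq_zero_AE)
    show "AE x in lebesgue. indicator (Ik k) x *\<^sub>R norm (f x) powr p = 0"
      using AE by eventually_elim (use Ik_sub[OF k] in \<open>auto simp: indicator_def\<close>)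
  qed
  have T0: "gal_term X p q \<theta> f \<epsilon> = 0" for \<epsilon>
  proof -
    have "(\<Sum>\<^sub>\<infinity>k\<in>X. loc_int p f k powr (q * (1 + \<epsilon>) / p)) = (\<Sum>\<^sub>\<infinity>k\<in>X. 0)"
      by (intro infsum_cong) (simp add: L0)
    thus ?thesis unfolding gal_term_def by simp
  qed
  show "gal_norm X p q \<theta> f = 0" unfolding gal_norm_def T0 by simp
next
  assume N: "gal_norm X p q \<theta> f = 0"
  have "gal_term X p q \<theta> f 1 \<le> gal_norm X p q \<theta> f"
    unfolding gal_norm_def by (rule cSUP_upper) (use ga_D(4)[OF f p] in auto)
  hence "gal_term X p q \<theta> f 1 = 0" using N term_nonneg[of X p q \<theta> f 1] by linarith
  hence S0: "(\<Sum>\<^sub>\<infinity>k\<in>X. loc_int p f k powr (q * (1 + 1) / p)) = 0"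
    unfolding gal_term_def by simp
  have sm: "(\<lambda>k. loc_int p f k powr (q * (1 + 1) / p)) summable_on X" using ga_D(3)[OF f p, of 1] by simp
  have "loc_int p f k powr (q * (1 + 1) / p) = 0" if "k \<in> X" for k
    using nonneg_infsum_le_0D[OF _ sm, of k] S0 that by simp
  hence L0: "loc_int p f k = 0" if "k \<in> X" for k using that by simp
  have p0: "p > 0" using p by simp
  have "AE x in lebesgue. x \<in> Ik k \<longrightarrow> f x = 0" if k: "k \<in> X" for k
  proof -
    have "integral\<^sup>L lebesgue (\<lambda>x. (indicator (Ik k) x * norm (f x)) powr p) = 0"
      using L0[OF k] loc_int_alt[OF p0] by simp
    hence "AE x in lebesgue. (indicator (Ik k) x * norm (f x)) powr p = 0"
      using integral_nonneg_eq_0_iff_AE[OF ga_D(2)[OF f p k]] by simp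
    thus ?thesis by eventually_elim (auto simp: indicator_def)
  qed
  hence "AE x in lebesgue. \<forall>k\<in>X. x \<in> Ik k \<longrightarrow> f x = 0"
    by (subst AE_ball_countable) auto
  thus "AE x in lebesgue. x \<in> dom_X X \<longrightarrow> f x = 0"
    by eventually_elim (auto simp: dom_X_def)
qed



lemma pw_mult: "p > 0 \<Longrightarrow> loc_int p (\<lambda>x. c * f x) k powr (r / p) = norm c powr r * loc_int p f k powr (r / p)"
  by (simp add: loc_int_mult powr_mult loc_int_nonneg powr_powr)

theorem theorem2p1:
  fixes X :: "int set" and p q \<theta> :: real
  assumes "admissible_index_set X"
    and "1 \<le> p" and "1 \<le> q" and "\<theta> > 0"
  shows "(\<lambda>x. 0) \<in> grand_amalgam X p q \<theta>
    \<and> (\<forall>f\<in>grand_amalgam X p q \<theta>. \<forall>g\<in>grand_amalgam X p q \<theta>.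
         (\<lambda>x. f x + g x) \<in> grand_amalgam X p q \<theta>)
    \<and> (\<forall>f\<in>grand_amalgam X p q \<theta>. \<forall>c::complex. (\<lambda>x. c * f x) \<in> grand_amalgam X p q \<theta>)
    \<and> (\<forall>f\<in>grand_amalgam X p q \<theta>. 0 \<le> gal_norm X p q \<theta> f)
    \<and> (\<forall>f\<in>grand_amalgam X p q \<theta>.
         gal_norm X p q \<theta> f = 0 \<longleftrightarrow> (AE x in lebesgue. x \<in> dom_X X \<longrightarrow> f x = 0))
    \<and> (\<forall>f\<in>grand_amalgam X p q \<theta>. \<forall>c::complex.
         gal_norm X p q \<theta> (\<lambda>x. c * f x) = norm c * gal_norm X p q \<theta> f)
    \<and> (\<forall>f\<in>grand_amalgam X p q \<theta>. \<forall>g\<in>grand_amalgam X p q \<theta>.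
         gal_norm X p q \<theta> (\<lambda>x. f x + g x) \<le> gal_norm X p q \<theta> f + gal_norm X p q \<theta> g)"
proof -
  have p: "p \<ge> 1" and q: "q \<ge> 1" using assms by auto
  have p0: "p > 0" using p by simp
  have r0: "q * (1 + \<epsilon>) > 0" if "\<epsilon> > 0" for \<epsilon> :: real using q that by simp
  have upper: "gal_term X p q \<theta> f \<epsilon> \<le> gal_norm X p q \<theta> f" if "f \<in> grand_amalgam X p q \<theta>" "\<epsilon> > 0" for f \<epsilon>
    unfolding gal_norm_def by (rule cSUP_upper) (use ga_D(4)[OF that(1) p] that(2) in auto)
  have Z: "(\<lambda>x. 0) \<in> grand_amalgam X p q \<theta>"
  proof -
    have l0: "loc_int p (\<lambda>x. 0) k = 0" for k by (simp add: loc_int_def)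
    have t0: "gal_term X p q \<theta> (\<lambda>x. 0) \<epsilon> = 0" for \<epsilon> by (simp add: gal_term_def l0)
    have b: "bdd_above ((\<lambda>x::real. 0::real) ` {0<..})" by (rule bdd_aboveI2[where M=0]) simp
    show ?thesis unfolding grand_amalgam_def set_borel_measurable_def
      by (simp add: l0 t0 b)
  qed
  have A: "(\<lambda>x. f x + g x) \<in> grand_amalgam X p q \<theta>"
    if f: "f \<in> grand_amalgam X p q \<theta>" and g: "g \<in> grand_amalgam X p q \<theta>" for f g
  proof -
    have "set_borel_measurable lebesgue (dom_X X) (\<lambda>x. f x + g x)"
      by (rule meas_add[OF ga_D(1)[OF f p] ga_D(1)[OF g p]])
    moreover have "set_integrable lebesgue (Ik k) (\<lambda>x. norm (f x + g x) powr p)" if k: "k \<in> X" for k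
      unfolding setint_alt[OF p0]
      by (rule int_add[OF p ga_D(1)[OF f p] ga_D(1)[OF g p] k ga_D(2)[OF f p k] ga_D(2)[OF g p k]])
    moreover have "(\<lambda>k. loc_int p (\<lambda>x. f x + g x) k powr (q * (1 + \<epsilon>) / p)) summable_on X" if "\<epsilon> > 0" for \<epsilon>
      by (rule tri_term(1)[OF f g p q that])
    moreover have "bdd_above (gal_term X p q \<theta> (\<lambda>x. f x + g x) ` {0<..})"
    proof (rule bdd_aboveI2)
      fix \<epsilon> :: real assume "\<epsilon> \<in> {0<..}"
      hence e: "\<epsilon> > 0" by simp
      show "gal_term X p q \<theta> (\<lambda>x. f x + g x) \<epsilon> \<le> gal_norm X p q \<theta> f + gal_norm X p q \<theta> g"
        using tri_term(2)[OF f g p q e] upper[OF f e] upper[OF g e] by linarith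
    qed
    ultimately show ?thesis unfolding grand_amalgam_def by blast
  qed
  have M: "(\<lambda>x. c * f x) \<in> grand_amalgam X p q \<theta>"
    if f: "f \<in> grand_amalgam X p q \<theta>" for f c
  proof -
    have "set_borel_measurable lebesgue (dom_X X) (\<lambda>x. c * f x)"
      by (rule meas_mult[OF ga_D(1)[OF f p]])
    moreover have "set_integrable lebesgue (Ik k) (\<lambda>x. norm (c * f x) powr p)" if k: "k \<in> X" for k
    proof -
      have "(\<lambda>x. (indicator (Ik k) x * norm (c * f x)) powr p) = (\<lambda>x. norm c powr p * (indicator (Ik k) x * norm (f x)) powr p)"
        by (auto simp: fun_eq_iff norm_mult powr_mult indicator_def)
      thus ?thesis unfolding setint_alt[OF p0] using ga_D(2)[OF f p k] by simp
    qed
    moreover have "(\<lambda>k. loc_int p (\<lambda>x. c * f x) k powr (q * (1 + \<epsilon>) / p)) summable_on X" if "\<epsilon> > 0" for \<epsilon>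
      unfolding pw_mult[OF p0] by (intro summable_on_cmult_right ga_D(3)[OF f p that])
    moreover have "bdd_above (gal_term X p q \<theta> (\<lambda>x. c * f x) ` {0<..})"
    proof (rule bdd_aboveI2)
      fix \<epsilon> :: real assume "\<epsilon> \<in> {0<..}"
      hence e: "\<epsilon> > 0" by simp
      show "gal_term X p q \<theta> (\<lambda>x. c * f x) \<epsilon> \<le> norm c * gal_norm X p q \<theta> f"
        unfolding term_mult[OF p0 r0[OF e] e] using upper[OF f e] by (intro mult_left_mono) auto
    qed
    ultimately show ?thesis unfolding grand_amalgam_def by blast
  qed
  have NN: "0 \<le> gal_norm X p q \<theta> f" if f: "f \<in> grand_amalgam X p q \<theta>" for f
    using upper[OF f, of 1] term_nonneg[of X p q \<theta> f 1] by simp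
  have H: "gal_norm X p q \<theta> (\<lambda>x. c * f x) = norm c * gal_norm X p q \<theta> f"
    if f: "f \<in> grand_amalgam X p q \<theta>" for f c
  proof -
    have "gal_norm X p q \<theta> (\<lambda>x. c * f x) = (SUP \<epsilon>\<in>{0<..}. norm c * gal_term X p q \<theta> f \<epsilon>)"
      unfolding gal_norm_def by (intro SUP_cong refl) (simp add: term_mult[OF p0 r0])
    also have "\<dots> = norm c * gal_norm X p q \<theta> f"
      unfolding gal_norm_def by (rule SUP_scale) (use ga_D(4)[OF f p] in auto)
    finally show ?thesis .
  qed
  have T: "gal_norm X p q \<theta> (\<lambda>x. f x + g x) \<le> gal_norm X p q \<theta> f + gal_norm X p q \<theta> g"
    if f: "f \<in> grand_amalgam X p q \<theta>" and g: "g \<in> grand_amalgam X p q \<theta>" for f g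
    unfolding gal_norm_def[of X p q \<theta> "\<lambda>x. f x + g x"]
  proof (rule cSUP_least)
    fix \<epsilon> :: real assume "\<epsilon> \<in> {0<..}"
    hence e: "\<epsilon> > 0" by simp
    show "gal_term X p q \<theta> (\<lambda>x. f x + g x) \<epsilon> \<le> gal_norm X p q \<theta> f + gal_norm X p q \<theta> g"
      using tri_term(2)[OF f g p q e] upper[OF f e] upper[OF g e] by linarith
  qed auto
  show ?thesis using Z A M NN norm_zero[OF _ p q] H T by blast
qed


end
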